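(* Let $G$ be a structured single-touch computation DAG, and consider its sequential execution (one processor, parsimonious work stealing, future thread first at every fork). Then for every touch $x$ in $G$, with corresponding fork $v$: (i) the future parent of $x$ is executed before the local parent of $x$; and (ii) the right child of $v$ is the node executed immediately after the future parent of $x$.
   Context: Computation model. A future-parallel computation is a finite DAG whose nodes are tasks. Every node has in-degree and out-degree in $\{1,2\}$, except a distinguished root node (in-degree $0$) and a distinguished final node (out-degree $0$). Edges are of three types: continuation edges, future edges and touch edges. A thread is a maximal chain of nodes connected by continuation edges. The main thread begins at the root and ends at the final node. Every other thread $t$ begins at a node with an incoming future edge from a node $v$ of another thread $t'$; then $v$ is the fork of $t$, $t'$ is the parent thread of $t$, and $t$ is the future thread at $v$. A fork $v$ has two children: the first node of $t$ (the left child) and the continuation successor of $v$ in $t'$ (the right child); both have in-degree $1$ and are not touches. The last node of every non-main thread has exactly one outgoing edge, which is a touch edge into another thread. If there is a touch edge from a node $v_1$ of thread $t_1$ to a node $v_2$ of thread $t_2\neq t_1$, and a continuation edge from $u_2$ to $v_2$, then $v_2$ is a touch of $t_1$ (a touch by $t_2$, i.e. it lies in $t_2$), $v_1$ is its future parent, $u_2$ its local parent, $t_1$ its future thread, and the fork of $t_1$ is its corresponding fork. A node $w$ is a descendant of a node $u$ if there is a directed path from $u$ to $w$. A DAG is a structured future-parallel computation if for the future thread $t$ of any fork $v$: (1) the local parents of the touches of $t$ are descendants of $v$, and (2) at least one touch of $t$ is a descendant of the right child of $v$. It is a structured single-touch computation if, in addition, each future thread $t$ spawned at a fork $v$ has exactly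 one touch, and this touch is a descendant of the right child of $v$ (its future parent is then the last node of $t$). Scheduler. In parsimonious work stealing with $P$ processors, each processor has a deque. A node is ready when all its parents have been executed. After executing a node of out-degree 1, a processor continues with its child if that child is ready. After executing a fork, it pushes one child onto the bottom of its deque and executes the other; "future thread first" means it executes the left child (first node of the future thread) and pushes the right child. When a processor has no node to execute, it pops the bottom node of its own deque if nonempty, and otherwise steals the top node of the deque of some other processor. The sequential execution is the execution with $P=1$. *)

theory Defs
  imports Main
begin

text \<open>A future-parallel computation is given by a finite node set V, three edge
relations C (continuation), F (future), T (touch), a root r and a final node f.\<close>

definition edges :: "('v \<times> 'v) set \<Rightarrow> ('v \<times> 'v) set \<Rightarrow> ('v \<times> 'v) set \<Rightarrow> ('v \<times> 'v) set" where
  "edges C F T = C \<union> F \<union> T"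

definition indeg :: "('v \<times> 'v) set \<Rightarrow> 'v \<Rightarrow> nat" where
  "indeg E v = card {u. (u, v) \<in> E}"

definition outdeg :: "('v \<times> 'v) set \<Rightarrow> 'v \<Rightarrow> nat" where
  "outdeg E v = card {w. (v, w) \<in> E}"

definition thread_of :: "('v \<times> 'v) set \<Rightarrow> 'v \<Rightarrow> 'v set" where
  "thread_of C v = {u. (u, v) \<in> (C \<union> C\<inverse>)\<^sup>*}"

definition future_dag ::
  "'v set \<Rightarrow> ('v \<times> 'v) set \<Rightarrow> ('v \<times> 'v) set \<Rightarrow> ('v \<times> 'v) set \<Rightarrow> 'v \<Rightarrow> 'v \<Rightarrow> bool" where
  "future_dag V C F T r f \<longleftrightarrow>
     finite V \<and> C \<subseteq> V \<times> V \<and> F \<subseteq> V \<times> V \<and> T \<subseteq> V \<times> V \<and>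
     C \<inter> F = {} \<and> C \<inter> T = {} \<and> F \<inter> T = {} \<and>
     r \<in> V \<and> f \<in> V \<and>
     acyclic (edges C F T) \<and>
     indeg (edges C F T) r = 0 \<and>
     (\<forall>v\<in>V. v \<noteq> r \<longrightarrow> indeg (edges C F T) v \<in> {1, 2}) \<and>
     outdeg (edges C F T) f = 0 \<and>
     (\<forall>v\<in>V. v \<noteq> f \<longrightarrow> outdeg (edges C F T) v \<in> {1, 2}) \<and>
     \<comment> \<open>continuation edges form chains\<close>
     (\<forall>u v w. (u, v) \<in> C \<longrightarrow> (u, w) \<in> C \<longrightarrow> v = w) \<and>
     (\<forall>u v w. (u, w) \<in> C \<longrightarrow> (v, w) \<in> C \<longrightarrow> u = v) \<and>
     \<comment> \<open>the main thread runs from the root to the final node\<close>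
     (r, f) \<in> C\<^sup>* \<and>
     \<comment> \<open>every other thread begins at a node with an incoming future edge from another thread\<close>
     (\<forall>s\<in>V. s \<noteq> r \<longrightarrow> (\<nexists>u. (u, s) \<in> C) \<longrightarrow>
        (\<exists>v. (v, s) \<in> F \<and> v \<notin> thread_of C s)) \<and>
     \<comment> \<open>a fork has a left child (future edge) and a right child (continuation edge),
         both of in-degree 1 and not touches\<close>
     (\<forall>v l. (v, l) \<in> F \<longrightarrow>
        (\<exists>rc. (v, rc) \<in> C \<and> indeg (edges C F T) l = 1 \<and> indeg (edges C F T) rc = 1 \<and>
              (\<nexists>p. (p, l) \<in> T) \<and> (\<nexists>p. (p, rc) \<in> T))) \<and>
     \<comment> \<open>the last node of every non-main thread has exactly one outgoing edge,
         a touch edge into another thread\<close>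
     (\<forall>u\<in>V. (\<nexists>w. (u, w) \<in> C) \<longrightarrow> u \<notin> thread_of C r \<longrightarrow>
        outdeg (edges C F T) u = 1 \<and> (\<exists>w. (u, w) \<in> T \<and> w \<notin> thread_of C u)) \<and>
     \<comment> \<open>touch edges go between different threads and leave from the last node
         of a non-main thread\<close>
     (\<forall>a b. (a, b) \<in> T \<longrightarrow> b \<notin> thread_of C a \<and> (\<nexists>w. (a, w) \<in> C) \<and> a \<notin> thread_of C r)"

definition is_touch_of :: "('v \<times> 'v) set \<Rightarrow> ('v \<times> 'v) set \<Rightarrow> 'v set \<Rightarrow> 'v \<Rightarrow> bool" where
  "is_touch_of C T t x \<longleftrightarrow> (\<exists>v1\<in>t. (v1, x) \<in> T) \<and> x \<notin> t \<and> (\<exists>u. (u, x) \<in> C)"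

definition structured ::
  "('v \<times> 'v) set \<Rightarrow> ('v \<times> 'v) set \<Rightarrow> ('v \<times> 'v) set \<Rightarrow> bool" where
  "structured C F T \<longleftrightarrow>
     (\<forall>v l rc. (v, l) \<in> F \<longrightarrow> (v, rc) \<in> C \<longrightarrow>
        (\<forall>x u. is_touch_of C T (thread_of C l) x \<longrightarrow> (u, x) \<in> C \<longrightarrow> (v, u) \<in> (edges C F T)\<^sup>*) \<and>
        (\<exists>x. is_touch_of C T (thread_of C l) x \<and> (rc, x) \<in> (edges C F T)\<^sup>*))"

definition structured_single_touch ::
  "('v \<times> 'v) set \<Rightarrow> ('v \<times> 'v) set \<Rightarrow> ('v \<times> 'v) set \<Rightarrow> bool" where
  "structured_single_touch C F T \<longleftrightarrow>
     structured C F T \<and>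
     (\<forall>v l rc. (v, l) \<in> F \<longrightarrow> (v, rc) \<in> C \<longrightarrow>
        (\<exists>!x. is_touch_of C T (thread_of C l) x) \<and>
        (\<forall>x. is_touch_of C T (thread_of C l) x \<longrightarrow> (rc, x) \<in> (edges C F T)\<^sup>*))"

definition ready :: "('v \<times> 'v) set \<Rightarrow> 'v list \<Rightarrow> 'v \<Rightarrow> bool" where
  "ready E es c \<longleftrightarrow> (\<forall>p. (p, c) \<in> E \<longrightarrow> p \<in> set es)"

text \<open>Sequential (P = 1) parsimonious work stealing, future thread first.
State: (nodes executed so far in order, node assigned to the processor, deque).
The bottom of the deque is the end of the list.  With one processor there is
nobody to steal from.\<close>
inductive seq_step ::
  "('v \<times> 'v) set \<Rightarrow> ('v \<times> 'v) set \<Rightarrow> ('v \<times> 'v) set \<Rightarrow>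
   ('v list \<times> 'v option \<times> 'v list) \<Rightarrow> ('v list \<times> 'v option \<times> 'v list) \<Rightarrow> bool"
  for C F T where
  fork: "(u, l) \<in> F \<Longrightarrow> (u, rc) \<in> C \<Longrightarrow>
         seq_step C F T (es, Some u, dq) (es @ [u], Some l, dq @ [rc])"
| cont: "\<nexists>l. (u, l) \<in> F \<Longrightarrow> {c. (u, c) \<in> edges C F T} = {c} \<Longrightarrow>
         ready (edges C F T) (es @ [u]) c \<Longrightarrow>
         seq_step C F T (es, Some u, dq) (es @ [u], Some c, dq)"
| idle: "\<nexists>l. (u, l) \<in> F \<Longrightarrow>
         \<not> (\<exists>c. {c. (u, c) \<in> edges C F T} = {c} \<and> ready (edges C F T) (es @ [u]) c) \<Longrightarrow>
         seq_step C F T (es, Some u, dq) (es @ [u], None, dq)"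
| pop:  "seq_step C F T (es, None, dq @ [w]) (es, Some w, dq)"

definition seq_exec ::
  "('v \<times> 'v) set \<Rightarrow> ('v \<times> 'v) set \<Rightarrow> ('v \<times> 'v) set \<Rightarrow> 'v \<Rightarrow> 'v list \<Rightarrow> bool" where
  "seq_exec C F T r es \<longleftrightarrow> (seq_step C F T)\<^sup>*\<^sup>* ([], Some r, []) (es, None, [])"

end

theory Submission
  imports Defs
begin



locale fdag =
  fixes V :: "'v set" and C F T :: "('v \<times> 'v) set" and r f :: 'v
  assumes dag: "future_dag V C F T r f"
    and sst: "structured_single_touch C F T"
begin

abbreviation "E \<equiv> edges C F T"
abbreviation "R \<equiv> C \<union> F"

lemma D: "finite V" "C \<subseteq> V \<times> V" "F \<subseteq> V \<times> V" "T \<subseteq> V \<times> V"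
     "C \<inter> F = {}" "C \<inter> T = {}" "F \<inter> T = {}" "r \<in> V" "f \<in> V"
     "acyclic (edges C F T)" "indeg (edges C F T) r = 0"
     "\<forall>v\<in>V. v \<noteq> r \<longrightarrow> indeg (edges C F T) v \<in> {1, 2}"
     "outdeg (edges C F T) f = 0"
     "\<forall>v\<in>V. v \<noteq> f \<longrightarrow> outdeg (edges C F T) v \<in> {1, 2}"
     "\<forall>u v w. (u, v) \<in> C \<longrightarrow> (u, w) \<in> C \<longrightarrow> v = w"
     "\<forall>u v w. (u, w) \<in> C \<longrightarrow> (v, w) \<in> C \<longrightarrow> u = v"
     "(\<forall>s\<in>V. s \<noteq> r \<longrightarrow> (\<nexists>u. (u, s) \<in> C) \<longrightarrow>
        (\<exists>v. (v, s) \<in> F \<and> v \<notin> thread_of C s))"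
     "(\<forall>v l. (v, l) \<in> F \<longrightarrow>
        (\<exists>rc. (v, rc) \<in> C \<and> indeg (edges C F T) l = 1 \<and> indeg (edges C F T) rc = 1 \<and>
              (\<nexists>p. (p, l) \<in> T) \<and> (\<nexists>p. (p, rc) \<in> T)))"
     "(\<forall>u\<in>V. (\<nexists>w. (u, w) \<in> C) \<longrightarrow> u \<notin> thread_of C r \<longrightarrow>
        outdeg (edges C F T) u = 1 \<and> (\<exists>w. (u, w) \<in> T \<and> w \<notin> thread_of C u))"
     "(\<forall>a b. (a, b) \<in> T \<longrightarrow> b \<notin> thread_of C a \<and> (\<nexists>w. (a, w) \<in> C) \<and> a \<notin> thread_of C r)"
  using dag unfolding future_dag_def by simp_all

lemma finV: "finite V" using D by blast
lemma CV: "C \<subseteq> V \<times> V" using D by blast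
lemma FV: "F \<subseteq> V \<times> V" using D by blast
lemma TV: "T \<subseteq> V \<times> V" using D by blast
lemma EV: "E \<subseteq> V \<times> V" using CV FV TV unfolding edges_def by blast
lemma CE: "C \<subseteq> E" and FE: "F \<subseteq> E" and TE: "T \<subseteq> E" and RE: "R \<subseteq> E"
  unfolding edges_def by auto
lemma finE: "finite E" using EV finV by (meson finite_SigmaI infinite_super)
lemma acyc: "acyclic E" using D(10) .
lemma wfE: "wf E" using finE acyc finite_acyclic_wf by blast
lemma acycR: "acyclic R" using acyc acyclic_subset RE by blast
lemma CF: "C \<inter> F = {}" and CT: "C \<inter> T = {}" and FT: "F \<inter> T = {}"
  using D(5-7) .
lemma rV: "r \<in> V" using D(8) .

lemma C_fun: "(u, v) \<in> C \<Longrightarrow> (u, w) \<in> C \<Longrightarrow> v = w"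
  using D(15) by blast
lemma C_inj: "(u, w) \<in> C \<Longrightarrow> (v, w) \<in> C \<Longrightarrow> u = v"
  using D(16) by blast

lemma noself: "(a, a) \<notin> E"
  using acyc unfolding acyclic_def by blast

lemma E_irr: "(a, b) \<in> E \<Longrightarrow> a \<noteq> b" using noself by blast

lemma preds_fin: "finite {a. (a, b) \<in> E}"
proof -
  have "{a. (a, b) \<in> E} \<subseteq> fst ` E" by force
  thus ?thesis using finE by (meson finite_imageI finite_subset)
qed
lemma succs_fin: "finite {a. (b, a) \<in> E}"
proof -
  have "{a. (b, a) \<in> E} \<subseteq> snd ` E" by force
  thus ?thesis using finE by (meson finite_imageI finite_subset)
qed

lemma r_nopred: "(a, r) \<notin> E"
proof
  assume "(a, r) \<in> E"
  have "indeg E r = 0" using D(11) by blast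
  hence "{a. (a, r) \<in> E} = {}" using preds_fin unfolding indeg_def by simp
  thus False using \<open>(a, r) \<in> E\<close> by blast
qed

lemma indeg_le2: "card {a. (a, b) \<in> E} \<le> 2"
proof (cases "b \<in> V \<and> b \<noteq> r")
  case True
  hence "indeg E b \<in> {1,2}" using D(12) by blast
  thus ?thesis unfolding indeg_def by auto
next
  case False
  hence "{a. (a, b) \<in> E} = {}" using EV r_nopred by blast
  thus ?thesis by simp
qed

lemma outdeg_le2: "card {a. (b, a) \<in> E} \<le> 2"
proof (cases "b \<in> V \<and> b \<noteq> f")
  case True
  hence "outdeg E b \<in> {1,2}" using D(14) by blast
  thus ?thesis unfolding outdeg_def by auto
next
  case False
  show ?thesis
  proof (cases "b \<in> V")
    case True
    with False have "b = f" by blast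
    hence "outdeg E b = 0" using D(13) by blast
    thus ?thesis unfolding outdeg_def by simp
  next
    case False
    hence "{a. (b, a) \<in> E} = {}" using EV by blast
    thus ?thesis by simp
  qed
qed

lemma card1_eq: "finite A \<Longrightarrow> card A = 1 \<Longrightarrow> x \<in> A \<Longrightarrow> A = {x}"
  by (metis card_1_singletonE singletonD)

lemma fork_cond: "(v, l) \<in> F \<Longrightarrow> \<exists>rc. (v, rc) \<in> C \<and> indeg E l = 1 \<and> indeg E rc = 1 \<and>
              (\<nexists>p. (p, l) \<in> T) \<and> (\<nexists>p. (p, rc) \<in> T)"
  using D(18) by blast

lemma preds_l: "(v, l) \<in> F \<Longrightarrow> {a. (a, l) \<in> E} = {v}"
  using fork_cond[of v l] card1_eq[OF preds_fin] FE unfolding indeg_def by blast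

lemma preds_rc: "(v, l) \<in> F \<Longrightarrow> (v, rc) \<in> C \<Longrightarrow> {a. (a, rc) \<in> E} = {v}"
  using fork_cond[of v l] card1_eq[OF preds_fin] CE C_fun unfolding indeg_def by blast

lemma noT_rc: "(v, l) \<in> F \<Longrightarrow> (v, rc) \<in> C \<Longrightarrow> (p, rc) \<notin> T"
  using fork_cond[of v l] C_fun by blast
lemma noT_l: "(v, l) \<in> F \<Longrightarrow> (p, l) \<notin> T"
  using fork_cond[of v l] by blast
lemma noC_l: "(v, l) \<in> F \<Longrightarrow> (p, l) \<notin> C"
proof
  assume a: "(v, l) \<in> F" "(p, l) \<in> C"
  hence "p \<in> {a. (a, l) \<in> E}" using CE by blast
  hence "p = v" using preds_l[OF a(1)] by blast
  thus False using a CF by blast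
qed

lemma F_fun: "(u, l) \<in> F \<Longrightarrow> (u, l') \<in> F \<Longrightarrow> l = l'"
proof (rule ccontr)
  assume a: "(u, l) \<in> F" "(u, l') \<in> F" "l \<noteq> l'"
  obtain rc where rc: "(u, rc) \<in> C" using fork_cond[OF a(1)] by blast
  have d: "l \<noteq> rc" "l' \<noteq> rc" using a rc CF by blast+
  have "{l, l', rc} \<subseteq> {a. (u, a) \<in> E}" using a rc CE FE by blast
  hence "card {l, l', rc} \<le> card {a. (u, a) \<in> E}" by (rule card_mono[OF succs_fin])
  also have "\<dots> \<le> 2" by (rule outdeg_le2)
  finally show False using a(3) d by simp
qed

lemma fork_C: "(v, l) \<in> F \<Longrightarrow> \<exists>rc. (v, rc) \<in> C" using fork_cond by blast

lemma Tsrc: "(a, b) \<in> T \<Longrightarrow> b \<notin> thread_of C a \<and> (\<nexists>w. (a, w) \<in> C) \<and> a \<notin> thread_of C r"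
  using D(20) by blast

lemma T_Cpred: "(p, x) \<in> T \<Longrightarrow> \<exists>lp. (lp, x) \<in> C"
proof (rule ccontr)
  assume a: "(p, x) \<in> T" "\<nexists>lp. (lp, x) \<in> C"
  have xV: "x \<in> V" using a TV by blast
  have "x \<noteq> r" using a r_nopred TE by blast
  then obtain v where v: "(v, x) \<in> F" "v \<notin> thread_of C x"
    using D(17) xV a(2) by blast
  have "p = v" using preds_l[OF v(1)] a TE by blast
  thus False using a v FT by blast
qed

lemma touch_preds: "(p, x) \<in> T \<Longrightarrow> (lp, x) \<in> C \<Longrightarrow> {a. (a, x) \<in> E} = {p, lp}"
proof -
  assume a: "(p, x) \<in> T" "(lp, x) \<in> C"
  have s: "{p, lp} \<subseteq> {a. (a, x) \<in> E}" using a TE CE by blast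
  have "p \<noteq> lp" using a Tsrc by blast
  hence "card {p, lp} = 2" by simp
  hence "card {a. (a, x) \<in> E} \<le> card {p, lp}" using indeg_le2 by simp
  thus ?thesis using card_seteq[OF preds_fin s] by simp
qed

end



context fdag
begin

lemma thread_sym: "u \<in> thread_of C v \<longleftrightarrow> v \<in> thread_of C u"
proof -
  have "sym (C \<union> C\<inverse>)" by (auto simp: sym_def)
  hence "sym ((C \<union> C\<inverse>)\<^sup>*)" by (rule sym_rtrancl)
  thus ?thesis unfolding thread_of_def by (auto simp: sym_def)
qed

lemma thread_trans: "u \<in> thread_of C v \<Longrightarrow> v \<in> thread_of C w \<Longrightarrow> u \<in> thread_of C w"
  unfolding thread_of_def by (meson mem_Collect_eq rtrancl_trans)

lemma Cstar_thread: "(a, b) \<in> C\<^sup>* \<Longrightarrow> a \<in> thread_of C b"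
proof -
  assume "(a, b) \<in> C\<^sup>*"
  hence "(a, b) \<in> (C \<union> C\<inverse>)\<^sup>*" by (rule rtrancl_mono[THEN subsetD, rotated]) auto
  thus ?thesis unfolding thread_of_def by simp
qed

lemma thread_refl: "a \<in> thread_of C a" unfolding thread_of_def by simp

lemma TH: "(a, b) \<in> (C \<union> C\<inverse>)\<^sup>* \<Longrightarrow> (a, b) \<in> C\<^sup>* \<or> (b, a) \<in> C\<^sup>*"
proof (induction rule: rtrancl_induct)
  case base
  then show ?case by simp
next
  case (step y z)
  show ?case
  proof (cases "(y, z) \<in> C")
    case True
    show ?thesis
    proof (cases "(a, y) \<in> C\<^sup>*")
      case True
      then show ?thesis using \<open>(y, z) \<in> C\<close> by (meson rtrancl.rtrancl_into_rtrancl)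
    next
      case False
      hence ya: "(y, a) \<in> C\<^sup>*" using step.IH by blast
      show ?thesis
      proof (cases "y = a")
        case True
        then show ?thesis using \<open>(y, z) \<in> C\<close> by auto
      next
        case False
        then obtain c where "(y, c) \<in> C" "(c, a) \<in> C\<^sup>*" using ya by (meson converse_rtranclE)
        hence "c = z" using C_fun \<open>(y, z) \<in> C\<close> by blast
        then show ?thesis using \<open>(c, a) \<in> C\<^sup>*\<close> by blast
      qed
    qed
  next
    case False
    hence zy: "(z, y) \<in> C" using step.hyps(2) by blast
    show ?thesis
    proof (cases "(y, a) \<in> C\<^sup>*")
      case True
      then show ?thesis using zy by (meson converse_rtrancl_into_rtrancl)
    next
      case False
      hence ay: "(a, y) \<in> C\<^sup>*" using step.IH by blast
      show ?thesis
      proof (cases "y = a")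
        case True
        then show ?thesis using zy by auto
      next
        case False
        then obtain c where "(a, c) \<in> C\<^sup>*" "(c, y) \<in> C" using ay by (metis rtranclE)
        hence "c = z" using C_inj zy by blast
        then show ?thesis using \<open>(a, c) \<in> C\<^sup>*\<close> by blast
      qed
    qed
  qed
qed

lemma thread_Cstar: "a \<in> thread_of C b \<Longrightarrow> (a, b) \<in> C\<^sup>* \<or> (b, a) \<in> C\<^sup>*"
  unfolding thread_of_def using TH by blast

lemma nopred_Cstar: "(a, b) \<in> C\<^sup>* \<Longrightarrow> \<nexists>d. (d, b) \<in> C \<Longrightarrow> a = b"
  by (meson rtranclE)

lemma first_unique: "a \<in> thread_of C b \<Longrightarrow> \<nexists>d. (d, a) \<in> C \<Longrightarrow> \<nexists>d. (d, b) \<in> C \<Longrightarrow> a = b"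
  using thread_Cstar nopred_Cstar by metis

lemma first_fwd: "y \<in> thread_of C s \<Longrightarrow> \<nexists>d. (d, s) \<in> C \<Longrightarrow> (s, y) \<in> C\<^sup>*"
  using thread_Cstar nopred_Cstar by metis

lemma last_fwd: "(s, y) \<in> C\<^sup>* \<Longrightarrow> (s, u) \<in> C\<^sup>* \<Longrightarrow> \<nexists>d. (u, d) \<in> C \<Longrightarrow> (y, u) \<in> C\<^sup>*"
proof -
  assume a: "(s, y) \<in> C\<^sup>*" "(s, u) \<in> C\<^sup>*" "\<nexists>d. (u, d) \<in> C"
  have "y \<in> thread_of C u"
    using a(1,2) Cstar_thread thread_sym thread_trans by metis
  hence "(y, u) \<in> C\<^sup>* \<or> (u, y) \<in> C\<^sup>*" by (rule thread_Cstar)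
  thus ?thesis using a(3) by (metis converse_rtranclE rtrancl.rtrancl_refl)
qed

lemma wfC: "wf C" using wfE CE wf_subset by blast
lemma wfR: "wf R" using wfE RE wf_subset by blast

lemma first_exists: "\<exists>s. (s, y) \<in> C\<^sup>* \<and> (\<nexists>d. (d, s) \<in> C)"
proof (induction y rule: wf_induct[OF wfC])
  case (1 y)
  show ?case
  proof (cases "\<exists>d. (d, y) \<in> C")
    case True
    then obtain d where d: "(d, y) \<in> C" by blast
    then obtain s where "(s, d) \<in> C\<^sup>*" "\<nexists>d. (d, s) \<in> C" using 1 by blast
    then show ?thesis using d by (meson rtrancl.rtrancl_into_rtrancl)
  next
    case False
    then show ?thesis by blast
  qed
qed

lemma thread_fork:
  assumes "y \<in> V" "y \<notin> thread_of C r"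
  shows "\<exists>s v rc. (s, y) \<in> C\<^sup>* \<and> (v, s) \<in> F \<and> (v, rc) \<in> C"
proof -
  obtain s where s: "(s, y) \<in> C\<^sup>*" "\<nexists>d. (d, s) \<in> C" using first_exists by blast
  have sV: "s \<in> V" using s(1) assms(1) CV by (metis converse_rtranclE mem_Sigma_iff subsetD)
  have "s \<noteq> r" using s(1) assms(2) Cstar_thread thread_sym by metis
  then obtain v where "(v, s) \<in> F" using D(17) sV s(2) by blast
  then show ?thesis using s fork_C by blast
qed

lemma R_pred_unique: "(a, b) \<in> R \<Longrightarrow> (a', b) \<in> R \<Longrightarrow> a = a'"
proof -
  assume a: "(a, b) \<in> R" "(a', b) \<in> R"
  show ?thesis
  proof (cases "(a, b) \<in> F")
    case True
    have "a' \<in> {x. (x, b) \<in> E}" using a(2) RE by blast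
    then show ?thesis using preds_l[OF True] by auto
  next
    case False
    hence ab: "(a, b) \<in> C" using a by blast
    show ?thesis
    proof (cases "(a', b) \<in> F")
      case True
      have "a \<in> {x. (x, b) \<in> E}" using a(1) RE by blast
      then show ?thesis using preds_l[OF True] by auto
    next
      case False
      then show ?thesis using ab a(2) C_inj by blast
    qed
  qed
qed

lemma R_back: "(l, b) \<in> R\<^sup>* \<Longrightarrow> b \<noteq> l \<Longrightarrow> (p, b) \<in> R \<Longrightarrow> (l, p) \<in> R\<^sup>*"
  by (metis R_pred_unique rtranclE)

lemma R_cyc: "(a, b) \<in> R\<^sup>+ \<Longrightarrow> (b, a) \<in> R\<^sup>* \<Longrightarrow> False"
  using acycR unfolding acyclic_def by (meson rtrancl_trancl_trancl)

lemma G: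
  assumes "(s, y) \<in> C\<^sup>*" "(L, y) \<in> R\<^sup>*" "(s, L) \<in> R\<^sup>+" "\<nexists>d. (d, L) \<in> C"
  shows False
  using assms(1,2)
proof (induction rule: rtrancl_induct)
  case base
  then show ?case using assms(3) R_cyc by blast
next
  case (step y z)
  show ?case
  proof (cases "L = z")
    case True
    then show ?thesis using step.hyps(2) assms(4) by blast
  next
    case False
    hence "(L, y) \<in> R\<^sup>*" using R_back step.prems step.hyps(2) by blast
    then show ?thesis using step.IH by blast
  qed
qed

lemma rc_notin_sub:
  assumes "(w, L) \<in> F" "(w, rc) \<in> C" "(L, rc) \<in> R\<^sup>*" shows False
proof -
  have "rc \<noteq> L" using assms(1,2) noC_l by blast
  hence "(L, w) \<in> R\<^sup>*" using R_back assms by blast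
  thus False using assms(1) R_cyc by blast
qed

lemma P2:
  assumes "(a, b) \<in> E" "(l, b) \<in> R\<^sup>*" "(l, a) \<notin> R\<^sup>*" "(v, l) \<in> F"
  shows "(a, b) \<in> T \<or> (b = l \<and> (a, b) \<in> F)"
proof (cases "(a, b) \<in> T")
  case True then show ?thesis by blast
next
  case False
  hence ab: "(a, b) \<in> R" using assms(1) unfolding edges_def by blast
  show ?thesis
  proof (cases "b = l")
    case True
    hence "(a, b) \<notin> C" using noC_l assms(4) by blast
    then show ?thesis using ab True by blast
  next
    case False
    then show ?thesis using R_back assms(2,3) ab by blast
  qed
qed

lemma cross:
  assumes "(v, y) \<in> E\<^sup>*" "P y" "\<not> P v"
  shows "\<exists>a b. (v, a) \<in> E\<^sup>* \<and> (a, b) \<in> E \<and> (b, y) \<in> E\<^sup>* \<and> \<not> P a \<and> P b"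
  using assms
proof (induction rule: converse_rtrancl_induct)
  case base
  then show ?case by blast
next
  case (step v c)
  show ?case
  proof (cases "P c")
    case True
    then show ?thesis using step by blast
  next
    case False
    then obtain a b where "(c, a) \<in> E\<^sup>*" "(a, b) \<in> E" "(b, y) \<in> E\<^sup>*" "\<not> P a" "P b"
      using step by blast
    then show ?thesis using step.hyps(1) by (meson converse_rtrancl_into_rtrancl)
  qed
qed

lemma anc_closed_star: "(a, b) \<in> E\<^sup>* \<Longrightarrow> b \<in> X \<Longrightarrow> \<forall>a b. (a, b) \<in> E \<longrightarrow> b \<in> X \<longrightarrow> a \<in> X \<Longrightarrow> a \<in> X"
  by (induction rule: converse_rtrancl_induct) auto

lemma touch_of:
  assumes "(v, l) \<in> F" "p \<in> thread_of C l" "(p, x) \<in> T" "(lp, x) \<in> C"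
  shows "is_touch_of C T (thread_of C l) x"
proof -
  have "x \<notin> thread_of C p" using Tsrc assms(3) by blast
  hence "x \<notin> thread_of C l" using assms(2) thread_trans thread_sym by metis
  thus ?thesis unfolding is_touch_of_def using assms by blast
qed

lemma structured_lp:
  assumes "(v, l) \<in> F" "(v, rc) \<in> C" "p \<in> thread_of C l" "(p, x) \<in> T" "(lp, x) \<in> C"
  shows "(v, lp) \<in> E\<^sup>*" "(rc, x) \<in> E\<^sup>*"
proof -
  have t: "is_touch_of C T (thread_of C l) x" using touch_of assms by blast
  show "(v, lp) \<in> E\<^sup>*" using sst t assms(1,2,5)
    unfolding structured_single_touch_def structured_def by blast
  show "(rc, x) \<in> E\<^sup>*" using sst t assms(1,2)
    unfolding structured_single_touch_def by blast
qed

end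



context fdag
begin

definition lcf where "lcf w = (SOME l. (w, l) \<in> F)"
definition rcf where "rcf w = (SOME c. (w, c) \<in> C)"

lemma lcf: "(w, l) \<in> F \<Longrightarrow> lcf w = l"
  unfolding lcf_def using F_fun by (metis someI)
lemma rcf: "(w, c) \<in> C \<Longrightarrow> rcf w = c"
  unfolding rcf_def using C_fun by (metis someI)
lemma rcfC: "(w, lcf w) \<in> F \<Longrightarrow> (w, rcf w) \<in> C"
  using fork_C rcf by metis

fun chain :: "'v \<Rightarrow> 'v list \<Rightarrow> bool" where
  "chain p [] = True"
| "chain p (w # ws) = ((p, w) \<in> C\<^sup>* \<and> chain (lcf w) ws)"

definition topl :: "'v \<Rightarrow> 'v list \<Rightarrow> 'v" where
  "topl p os = (if os = [] then p else lcf (last os))"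

lemma topl_Cons: "topl p (w # ws) = topl (lcf w) ws"
  unfolding topl_def by simp

lemma chain_snoc: "chain p (os @ [w]) \<longleftrightarrow> chain p os \<and> (topl p os, w) \<in> C\<^sup>*"
  by (induction os arbitrary: p) (auto simp: topl_def)

lemma chain_top_R: "chain q ws \<Longrightarrow> \<forall>w\<in>set ws. (w, lcf w) \<in> F \<Longrightarrow> (q, topl q ws) \<in> R\<^sup>*"
proof (induction ws arbitrary: q)
  case Nil
  then show ?case by (simp add: topl_def)
next
  case (Cons w ws)
  have "(q, w) \<in> C\<^sup>*" using Cons.prems(1) by simp
  hence "(q, w) \<in> R\<^sup>*" by (rule rtrancl_mono[THEN subsetD, rotated]) blast
  moreover have "(w, lcf w) \<in> R" using Cons.prems(2) by auto
  moreover have "(lcf w, topl (lcf w) ws) \<in> R\<^sup>*" using Cons by auto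
  ultimately have "(q, topl (lcf w) ws) \<in> R\<^sup>*" by (meson rtrancl_into_rtrancl rtrancl_trans)
  thus ?case by (simp add: topl_Cons)
qed

lemma chain_R: "chain p os \<Longrightarrow> \<forall>w\<in>set os. (w, lcf w) \<in> F \<Longrightarrow> w \<in> set os \<Longrightarrow> (lcf w, topl p os) \<in> R\<^sup>*"
proof (induction os arbitrary: p)
  case Nil
  then show ?case by simp
next
  case (Cons w' ws)
  show ?case
  proof (cases "w = w'")
    case True
    then show ?thesis using chain_top_R Cons.prems by (simp add: topl_Cons)
  next
    case False
    then show ?thesis using Cons by (simp add: topl_Cons)
  qed
qed

lemma chain_below:
  assumes "chain p os" "\<forall>w\<in>set os. (w, lcf w) \<in> F" "w \<in> set os" "w \<noteq> last os"
  shows "(lcf w, lcf (last os)) \<in> R\<^sup>+"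
proof -
  have ne: "os \<noteq> []" using assms(3) by auto
  have os: "os = butlast os @ [last os]" using ne by simp
  have wb: "w \<in> set (butlast os)" using assms(3,4) os by (metis Un_iff empty_iff empty_set insert_iff list.set(2) set_append)
  have c: "chain p (butlast os)" "(topl p (butlast os), last os) \<in> C\<^sup>*"
    using assms(1) chain_snoc os by metis+
  have fb: "\<forall>w\<in>set (butlast os). (w, lcf w) \<in> F" using assms(2) by (auto dest: in_set_butlastD)
  have "(lcf w, topl p (butlast os)) \<in> R\<^sup>*"
    using chain_R[OF c(1) fb wb] .
  moreover have "(topl p (butlast os), last os) \<in> R\<^sup>*" using c(2) by (rule rtrancl_mono[THEN subsetD, rotated]) blast
  moreover have "(last os, lcf (last os)) \<in> R" using assms(2) ne by auto
  ultimately show ?thesis by (meson rtrancl_into_trancl1 rtrancl_trans)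
qed

definition H1 where "H1 es \<longleftrightarrow> (\<forall>v l rc fp x i. (v, l) \<in> F \<longrightarrow> (v, rc) \<in> C \<longrightarrow> fp \<in> thread_of C l \<longrightarrow>
   (fp, x) \<in> T \<longrightarrow> Suc i < length es \<longrightarrow> es ! i = fp \<longrightarrow> es ! Suc i = rc)"
definition H1r where "H1r es u \<longleftrightarrow> (\<forall>v l rc fp x. (v, l) \<in> F \<longrightarrow> (v, rc) \<in> C \<longrightarrow> fp \<in> thread_of C l \<longrightarrow>
   (fp, x) \<in> T \<longrightarrow> es \<noteq> [] \<longrightarrow> last es = fp \<longrightarrow> u = rc)"
definition H2 where "H2 es \<longleftrightarrow> (\<forall>j<length es. \<forall>x p. (es ! j, x) \<in> C \<longrightarrow> (p, x) \<in> T \<longrightarrow> p \<in> set (take j es))"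

lemma H1_snoc: "H1 es \<Longrightarrow> H1r es u \<Longrightarrow> H1 (es @ [u])"
  unfolding H1_def H1r_def
proof (intro allI impI)
  fix v l rc fp x i
  assume h: "\<forall>v l rc fp x i. (v, l) \<in> F \<longrightarrow> (v, rc) \<in> C \<longrightarrow> fp \<in> thread_of C l \<longrightarrow>
       (fp, x) \<in> T \<longrightarrow> Suc i < length es \<longrightarrow> es ! i = fp \<longrightarrow> es ! Suc i = rc"
    and hr: "\<forall>v l rc fp x. (v, l) \<in> F \<longrightarrow> (v, rc) \<in> C \<longrightarrow> fp \<in> thread_of C l \<longrightarrow>
       (fp, x) \<in> T \<longrightarrow> es \<noteq> [] \<longrightarrow> last es = fp \<longrightarrow> u = rc"
    and a: "(v, l) \<in> F" "(v, rc) \<in> C" "fp \<in> thread_of C l" "(fp, x) \<in> T"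
       "Suc i < length (es @ [u])" "(es @ [u]) ! i = fp"
  show "(es @ [u]) ! Suc i = rc"
  proof (cases "Suc i < length es")
    case True
    have "es ! i = fp" using a(6) True by (simp add: nth_append)
    hence "es ! Suc i = rc" using h a(1-4) True by blast
    then show ?thesis using True by (simp add: nth_append)
  next
    case False
    hence si: "Suc i = length es" using a(5) by simp
    have ne: "es \<noteq> []" using si by auto
    have "last es = es ! i" using si ne by (metis diff_Suc_1 last_conv_nth)
    hence "es \<noteq> []" "last es = fp" using a(6) si ne by (auto simp: nth_append)
    hence "u = rc" using hr a(1-4) by blast
    then show ?thesis using si by (simp add: nth_append)
  qed
qed

lemma H1r_noT: "\<forall>x. (u, x) \<notin> T \<Longrightarrow> H1r (es @ [u]) u'"
  unfolding H1r_def by auto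

lemma H2_snoc: "H2 es \<Longrightarrow> (\<forall>x p. (u, x) \<in> C \<longrightarrow> (p, x) \<in> T \<longrightarrow> p \<in> set es) \<Longrightarrow> H2 (es @ [u])"
  unfolding H2_def
proof (intro allI impI)
  fix j x p
  assume h: "\<forall>j<length es. \<forall>x p. (es ! j, x) \<in> C \<longrightarrow> (p, x) \<in> T \<longrightarrow> p \<in> set (take j es)"
    and n: "\<forall>x p. (u, x) \<in> C \<longrightarrow> (p, x) \<in> T \<longrightarrow> p \<in> set es"
    and a: "j < length (es @ [u])" "((es @ [u]) ! j, x) \<in> C" "(p, x) \<in> T"
  show "p \<in> set (take j (es @ [u]))"
  proof (cases "j < length es")
    case True
    then show ?thesis using h a by (simp add: nth_append)
  next
    case False
    hence "j = length es" using a(1) by simp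
    then show ?thesis using n a by (simp add: nth_append)
  qed
qed

definition Inv where "Inv es u os \<longleftrightarrow>
  u \<in> V \<and> set es \<subseteq> V \<and> u \<notin> set es \<and> (\<forall>a. (a, u) \<in> E \<longrightarrow> a \<in> set es) \<and>
  (\<forall>a b. (a, b) \<in> E \<longrightarrow> b \<in> set es \<longrightarrow> a \<in> set es) \<and>
  set os \<subseteq> set es \<and> distinct os \<and> (\<forall>w\<in>set os. (w, lcf w) \<in> F) \<and>
  chain r os \<and> (topl r os, u) \<in> C\<^sup>* \<and>
  (\<forall>w\<in>set es. (\<exists>l. (w, l) \<in> F) \<longrightarrow> w \<notin> set os \<longrightarrow> (\<forall>y. (lcf w, y) \<in> C\<^sup>* \<longrightarrow> y \<in> set es)) \<and>
  (\<forall>w\<in>set os. \<forall>a b. (a, b) \<in> E \<longrightarrow> a \<notin> set es \<longrightarrow> b \<notin> set es \<longrightarrow> (lcf w, b) \<in> R\<^sup>* \<longrightarrow> (lcf w, a) \<in> R\<^sup>*) \<and>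
  (\<forall>w\<in>set os. rcf w \<notin> set es \<and> rcf w \<noteq> u) \<and>
  (\<forall>y\<in>V. y \<notin> set es \<longrightarrow> y \<noteq> u \<longrightarrow> (\<forall>a. (a, y) \<in> E \<longrightarrow> a \<in> set es) \<longrightarrow> y \<in> rcf ` set os) \<and>
  H1 es \<and> H1r es u \<and> H2 es"

lemma InvD:
  assumes "Inv es u os"
  shows "u \<in> V" "set es \<subseteq> V" "u \<notin> set es" "\<And>a. (a, u) \<in> E \<Longrightarrow> a \<in> set es"
    "\<And>a b. (a, b) \<in> E \<Longrightarrow> b \<in> set es \<Longrightarrow> a \<in> set es"
    "set os \<subseteq> set es" "distinct os" "\<And>w. w \<in> set os \<Longrightarrow> (w, lcf w) \<in> F"
    "chain r os" "(topl r os, u) \<in> C\<^sup>*"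
    "\<And>w y. w \<in> set es \<Longrightarrow> \<exists>l. (w, l) \<in> F \<Longrightarrow> w \<notin> set os \<Longrightarrow> (lcf w, y) \<in> C\<^sup>* \<Longrightarrow> y \<in> set es"
    "\<And>w a b. w \<in> set os \<Longrightarrow> (a, b) \<in> E \<Longrightarrow> a \<notin> set es \<Longrightarrow> b \<notin> set es \<Longrightarrow> (lcf w, b) \<in> R\<^sup>* \<Longrightarrow> (lcf w, a) \<in> R\<^sup>*"
    "\<And>w. w \<in> set os \<Longrightarrow> rcf w \<notin> set es" "\<And>w. w \<in> set os \<Longrightarrow> rcf w \<noteq> u"
    "\<And>y. y \<in> V \<Longrightarrow> y \<notin> set es \<Longrightarrow> y \<noteq> u \<Longrightarrow> (\<forall>a. (a, y) \<in> E \<longrightarrow> a \<in> set es) \<Longrightarrow> y \<in> rcf ` set os"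
    "H1 es" "H1r es u" "H2 es"
  using assms unfolding Inv_def by blast+

lemma unexec_desc: "(a, b) \<in> E\<^sup>* \<Longrightarrow> a \<notin> X \<Longrightarrow> \<forall>a b. (a, b) \<in> E \<longrightarrow> b \<in> X \<longrightarrow> a \<in> X \<Longrightarrow> b \<notin> X"
  using anc_closed_star by blast

lemma topl_ne: "os \<noteq> [] \<Longrightarrow> topl p os = lcf (last os)" unfolding topl_def by simp

lemma N1:
  assumes I: "Inv es u os" and uc: "(u, c) \<in> C" and pc: "(p, c) \<in> T"
  shows "p \<in> set es"
proof (rule ccontr)
  assume pn: "p \<notin> set es"
  have pV: "p \<in> V" using pc TV by blast
  have pnm: "p \<notin> thread_of C r" using Tsrc pc by blast
  obtain s v rcv where sv: "(s, p) \<in> C\<^sup>*" "(v, s) \<in> F" "(v, rcv) \<in> C"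
    using thread_fork[OF pV pnm] by blast
  have ps: "p \<in> thread_of C s" using sv(1) Cstar_thread thread_sym by metis
  have vu: "(v, u) \<in> E\<^sup>*" using structured_lp(1)[OF sv(2,3) ps pc uc] .
  have cn: "c \<notin> thread_of C s" using touch_of[OF sv(2) ps pc uc] unfolding is_touch_of_def by blast
  have vX: "v \<in> set es"
  proof (cases "v = u")
    case True
    hence "rcv = c" using sv(3) uc C_fun by blast
    thus ?thesis using noT_rc[OF sv(2,3)] pc by blast
  next
    case False
    then obtain q where "(v, q) \<in> E\<^sup>*" "(q, u) \<in> E" using vu by (metis rtranclE)
    hence "q \<in> set es" using InvD(4)[OF I] by blast
    thus ?thesis using anc_closed_star \<open>(v, q) \<in> E\<^sup>*\<close> InvD(5)[OF I] by blast
  qed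
  have lv: "lcf v = s" using lcf sv(2) by blast
  have vos: "v \<in> set os"
  proof (rule ccontr)
    assume "v \<notin> set os"
    hence "p \<in> set es" using InvD(11)[OF I vX _ _, of p] sv lv by blast
    thus False using pn by blast
  qed
  have ne: "os \<noteq> []" using vos by auto
  let ?L = "lcf (last os)"
  have Lu: "(?L, u) \<in> C\<^sup>*" using InvD(10)[OF I] topl_ne[OF ne] by simp
  have vtop: "v \<noteq> last os"
  proof
    assume "v = last os"
    hence "(s, c) \<in> C\<^sup>*" using Lu lv uc by auto
    thus False using cn Cstar_thread thread_sym by metis
  qed
  have below: "(s, ?L) \<in> R\<^sup>+" using chain_below[OF InvD(9)[OF I] _ vos vtop] InvD(8)[OF I] lv by blast
  have cX: "c \<notin> set es"
  proof
    assume "c \<in> set es"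
    hence "u \<in> set es" using InvD(5)[OF I] uc CE by blast
    thus False using InvD(3)[OF I] by blast
  qed
  have LuR: "(?L, u) \<in> R\<^sup>*" using Lu by (rule rtrancl_mono[THEN subsetD, rotated]) blast
  have Lc: "(?L, c) \<in> R\<^sup>*" using LuR uc by (meson UnCI rtrancl.rtrancl_into_rtrancl)
  have "(?L, p) \<in> R\<^sup>*" using InvD(12)[OF I _ _ pn cX Lc] ne pc TE by auto
  moreover have "(last os, ?L) \<in> F" using InvD(8)[OF I] ne by simp
  hence "\<nexists>d. (d, ?L) \<in> C" using noC_l by blast
  ultimately show False using G[OF sv(1) _ below] by blast
qed

end



context fdag
begin

lemma out_cont: "(u, c) \<in> C \<Longrightarrow> \<nexists>l. (u, l) \<in> F \<Longrightarrow> {c'. (u, c') \<in> E} = {c}"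
proof -
  assume a: "(u, c) \<in> C" "\<nexists>l. (u, l) \<in> F"
  have "c' = c" if "(u, c') \<in> E" for c'
  proof -
    have "(u, c') \<in> C \<or> (u, c') \<in> F \<or> (u, c') \<in> T" using that unfolding edges_def by blast
    moreover have "(u, c') \<notin> T" using Tsrc a(1) by blast
    ultimately show ?thesis using a C_fun by blast
  qed
  thus ?thesis using a(1) CE by blast
qed

lemma anc_snoc:
  assumes I: "Inv es u os"
  shows "\<forall>a b. (a, b) \<in> E \<longrightarrow> b \<in> set (es @ [u]) \<longrightarrow> a \<in> set (es @ [u])"
  using InvD(4,5)[OF I] by auto

lemma succ_notin:
  assumes I: "Inv es u os" and "(u, c) \<in> E"
  shows "c \<notin> set (es @ [u])"
proof -
  have "c \<noteq> u" using assms(2) E_irr by blast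
  moreover have "c \<notin> set es" using InvD(3,5)[OF I] assms(2) by blast
  ultimately show ?thesis by simp
qed

lemma cont_case:
  assumes I: "Inv es u os" and uc: "(u, c) \<in> C" and nf: "\<nexists>l. (u, l) \<in> F"
  shows "seq_step C F T (es, Some u, map rcf os) (es @ [u], Some c, map rcf os) \<and> Inv (es @ [u]) c os"
proof -
  have out: "{c'. (u, c') \<in> E} = {c}" using out_cont uc nf by blast
  have predc: "a \<in> set (es @ [u])" if "(a, c) \<in> E" for a
  proof -
    have "(a, c) \<in> C \<or> (a, c) \<in> F \<or> (a, c) \<in> T" using that unfolding edges_def by blast
    moreover have "(a, c) \<notin> F"
    proof
      assume "(a, c) \<in> F"
      hence "u = a" using preds_l[of a c] uc CE by blast
      thus False using \<open>(a, c) \<in> F\<close> uc CF by blast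
    qed
    moreover have "(a, c) \<in> C \<Longrightarrow> a = u" using uc C_inj by blast
    moreover have "(a, c) \<in> T \<Longrightarrow> a \<in> set es" using N1[OF I uc] by blast
    ultimately show ?thesis by auto
  qed
  have step: "seq_step C F T (es, Some u, map rcf os) (es @ [u], Some c, map rcf os)"
    by (rule seq_step.cont[OF nf out]) (unfold ready_def, use predc in blast)
  have cE: "(u, c) \<in> E" using uc CE by blast
  have uX: "u \<notin> set es" using InvD(3)[OF I] .
  have "Inv (es @ [u]) c os"
    unfolding Inv_def
  proof (intro conjI)
    show "c \<in> V" using uc CV by blast
    show "set (es @ [u]) \<subseteq> V" using InvD(1,2)[OF I] by simp
    show "c \<notin> set (es @ [u])" using succ_notin[OF I cE] .
    show "\<forall>a. (a, c) \<in> E \<longrightarrow> a \<in> set (es @ [u])" using predc by blast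
    show "\<forall>a b. (a, b) \<in> E \<longrightarrow> b \<in> set (es @ [u]) \<longrightarrow> a \<in> set (es @ [u])" using anc_snoc[OF I] .
    show "set os \<subseteq> set (es @ [u])" using InvD(6)[OF I] by auto
    show "distinct os" using InvD(7)[OF I] .
    show "\<forall>w\<in>set os. (w, lcf w) \<in> F" using InvD(8)[OF I] by blast
    show "chain r os" using InvD(9)[OF I] .
    show "(topl r os, c) \<in> C\<^sup>*" using InvD(10)[OF I] uc by (meson rtrancl.rtrancl_into_rtrancl)
    show "\<forall>w\<in>set (es @ [u]). (\<exists>l. (w, l) \<in> F) \<longrightarrow> w \<notin> set os \<longrightarrow> (\<forall>y. (lcf w, y) \<in> C\<^sup>* \<longrightarrow> y \<in> set (es @ [u]))"
      using InvD(11)[OF I] nf by auto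
    show "\<forall>w\<in>set os. \<forall>a b. (a, b) \<in> E \<longrightarrow> a \<notin> set (es @ [u]) \<longrightarrow> b \<notin> set (es @ [u]) \<longrightarrow> (lcf w, b) \<in> R\<^sup>* \<longrightarrow> (lcf w, a) \<in> R\<^sup>*"
      using InvD(12)[OF I] by simp
    show "\<forall>w\<in>set os. rcf w \<notin> set (es @ [u]) \<and> rcf w \<noteq> c"
    proof
      fix w assume w: "w \<in> set os"
      have "rcf w \<noteq> c"
      proof
        assume "rcf w = c"
        moreover have "(w, rcf w) \<in> C" using rcfC InvD(8)[OF I w] .
        ultimately have "w = u" using uc C_inj by blast
        thus False using w InvD(6)[OF I] uX by blast
      qed
      thus "rcf w \<notin> set (es @ [u]) \<and> rcf w \<noteq> c" using InvD(13,14)[OF I w] by simp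
    qed
    show "\<forall>y\<in>V. y \<notin> set (es @ [u]) \<longrightarrow> y \<noteq> c \<longrightarrow> (\<forall>a. (a, y) \<in> E \<longrightarrow> a \<in> set (es @ [u])) \<longrightarrow> y \<in> rcf ` set os"
    proof (intro ballI impI)
      fix y assume y: "y \<in> V" "y \<notin> set (es @ [u])" "y \<noteq> c" "\<forall>a. (a, y) \<in> E \<longrightarrow> a \<in> set (es @ [u])"
      have "(u, y) \<notin> E" using out y(3) by blast
      hence "\<forall>a. (a, y) \<in> E \<longrightarrow> a \<in> set es" using y(4) by auto
      thus "y \<in> rcf ` set os" using InvD(15)[OF I y(1)] y(2) by simp
    qed
    show "H1 (es @ [u])" using H1_snoc InvD(16,17)[OF I] by blast
    show "H1r (es @ [u]) c" using H1r_noT Tsrc uc by blast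
    show "H2 (es @ [u])"
      using H2_snoc[OF InvD(18)[OF I]] N1[OF I] uc C_fun by blast
  qed
  thus ?thesis using step by blast
qed

lemma path_sub:
  assumes I: "Inv es u os" and w: "w \<in> set os"
  shows "(c, b) \<in> E\<^sup>* \<Longrightarrow> c \<notin> set es \<Longrightarrow> (lcf w, b) \<in> R\<^sup>* \<Longrightarrow> (lcf w, c) \<in> R\<^sup>*"
proof (induction rule: converse_rtrancl_induct)
  case base
  then show ?case by simp
next
  case (step c c')
  have "c' \<notin> set es" using step.prems(1) step.hyps(1) InvD(5)[OF I] by blast
  hence "(lcf w, c') \<in> R\<^sup>*" using step.IH step.prems(2) by blast
  thus ?case using InvD(12)[OF I w step.hyps(1) step.prems(1) \<open>c' \<notin> set es\<close>] by blast
qed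

lemma fork_closure:
  assumes I: "Inv es u os" and ul: "(u, lu) \<in> F"
  shows "\<forall>a. (a, b) \<in> E \<longrightarrow> a \<notin> set es \<longrightarrow> a \<noteq> u \<longrightarrow> b \<notin> set es \<longrightarrow> b \<noteq> u \<longrightarrow>
           (lu, b) \<in> R\<^sup>* \<longrightarrow> (lu, a) \<in> R\<^sup>*"
proof (induction b rule: wf_induct[OF wf_trancl[OF wfE]])
  case (1 b)
  show ?case
  proof (intro allI impI)
    fix a
    assume ab: "(a, b) \<in> E" and aX: "a \<notin> set es" "a \<noteq> u" and bX: "b \<notin> set es" "b \<noteq> u"
      and lb: "(lu, b) \<in> R\<^sup>*"
    show "(lu, a) \<in> R\<^sup>*"
    proof (rule ccontr)
      assume na: "(lu, a) \<notin> R\<^sup>*"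
      have abT: "(a, b) \<in> T"
      proof -
        have "(a, b) \<in> T \<or> (b = lu \<and> (a, b) \<in> F)" using P2[OF ab lb na ul] .
        moreover have "b = lu \<Longrightarrow> a = u" using preds_l[OF ul] ab by blast
        ultimately show ?thesis using aX by blast
      qed
      have aV: "a \<in> V" using abT TV by blast
      have anm: "a \<notin> thread_of C r" using Tsrc abT by blast
      obtain s v rcv where sv: "(s, a) \<in> C\<^sup>*" "(v, s) \<in> F" "(v, rcv) \<in> C"
        using thread_fork[OF aV anm] by blast
      have as: "a \<in> thread_of C s" using sv(1) Cstar_thread thread_sym by metis
      obtain lp where lp: "(lp, b) \<in> C" using T_Cpred abT by blast
      have vlp: "(v, lp) \<in> E\<^sup>*" and rcb: "(rcv, b) \<in> E\<^sup>*"
        using structured_lp[OF sv(2,3) as abT lp] by blast+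
      have saR: "(s, a) \<in> R\<^sup>*" using sv(1) by (rule rtrancl_mono[THEN subsetD, rotated]) blast
      have lv: "lcf v = s" using lcf sv(2) by blast
      show False
      proof (cases "v = u")
        case True
        hence "s = lu" using F_fun sv(2) ul by blast
        thus False using saR na by blast
      next
        case vu: False
        show False
        proof (cases "v \<in> set es")
          case True
          have vos: "v \<in> set os"
          proof (rule ccontr)
            assume "v \<notin> set os"
            hence "a \<in> set es" using InvD(11)[OF I True _ _, of a] sv lv by blast
            thus False using aX by blast
          qed
          have ne: "os \<noteq> []" using vos by auto
          let ?L = "lcf (last os)"
          have lo: "last os \<in> set os" using ne by simp
          have Lu: "(?L, u) \<in> C\<^sup>*" using InvD(10)[OF I] topl_ne[OF ne] by simp
          have LuR: "(?L, u) \<in> R\<^sup>*" using Lu by (rule rtrancl_mono[THEN subsetD, rotated]) blast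
          have LbR: "(?L, b) \<in> R\<^sup>*" using LuR ul lb
            by (meson UnCI rtrancl.rtrancl_into_rtrancl rtrancl_trans)
          show False
          proof (cases "v = last os")
            case False
            have below: "(s, ?L) \<in> R\<^sup>+"
              using chain_below[OF InvD(9)[OF I] _ vos False] InvD(8)[OF I] lv by blast
            have "(?L, a) \<in> R\<^sup>*" using InvD(12)[OF I lo ab aX(1) bX(1) LbR] .
            moreover have "(last os, ?L) \<in> F" using InvD(8)[OF I lo] .
            hence "\<nexists>d. (d, ?L) \<in> C" using noC_l by blast
            ultimately show False using G[OF sv(1) _ below] by blast
          next
            case True
            have rcv: "rcv = rcf (last os)" using rcf sv(3) True by simp
            have "rcv \<notin> set es" using InvD(13)[OF I lo] rcv by simp
            hence "(?L, rcv) \<in> R\<^sup>*" using path_sub[OF I lo rcb _ LbR] by blast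
            thus False using rc_notin_sub[OF InvD(8)[OF I lo]] rcfC[OF InvD(8)[OF I lo]] rcv by blast
          qed
        next
          case False
          hence vX: "v \<notin> set (es @ [u])" using vu by simp
          have blu: "b \<noteq> lu" using lp noC_l[OF ul] by blast
          have llp: "(lu, lp) \<in> R\<^sup>*" using R_back[OF lb blu] lp by blast
          have nlv: "(lu, v) \<notin> R\<^sup>*"
          proof
            assume "(lu, v) \<in> R\<^sup>*"
            hence "(lu, s) \<in> R\<^sup>*" using sv(2) by (meson UnCI rtrancl.rtrancl_into_rtrancl)
            thus False using saR na by (meson rtrancl_trans)
          qed
          obtain a' b' where ab': "(v, a') \<in> E\<^sup>*" "(a', b') \<in> E" "(b', lp) \<in> E\<^sup>*"
              "(lu, a') \<notin> R\<^sup>*" "(lu, b') \<in> R\<^sup>*"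
            using cross[of v lp "\<lambda>y. (lu, y) \<in> R\<^sup>*", OF vlp llp nlv] by blast
          have ac: "\<forall>a b. (a, b) \<in> E \<longrightarrow> b \<in> set (es @ [u]) \<longrightarrow> a \<in> set (es @ [u])"
            using anc_snoc[OF I] .
          have a'X: "a' \<notin> set (es @ [u])" using unexec_desc[OF ab'(1) vX ac] .
          have "(v, b') \<in> E\<^sup>*" using ab'(1,2) by (meson rtrancl.rtrancl_into_rtrancl)
          hence b'X: "b' \<notin> set (es @ [u])" using unexec_desc[OF _ vX ac] by blast
          have "(b', b) \<in> E\<^sup>+" using ab'(3) lp CE by (meson rtrancl_into_trancl1 subsetD)
          hence "(lu, a') \<in> R\<^sup>*" using 1 ab'(2,5) a'X b'X by simp
          thus False using ab'(4) by blast
        qed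
      qed
    qed
  qed
qed

lemma fork_case:
  assumes I: "Inv es u os" and ul: "(u, l) \<in> F"
  shows "seq_step C F T (es, Some u, map rcf os) (es @ [u], Some l, map rcf (os @ [u])) \<and> Inv (es @ [u]) l (os @ [u])"
proof -
  have lu: "lcf u = l" using lcf ul .
  have urc: "(u, rcf u) \<in> C" using rcfC ul lu by simp
  have step: "seq_step C F T (es, Some u, map rcf os) (es @ [u], Some l, map rcf (os @ [u]))"
    using seq_step.fork[OF ul urc] by simp
  have uX: "u \<notin> set es" using InvD(3)[OF I] .
  have lE: "(u, l) \<in> E" using ul FE by blast
  have rE: "(u, rcf u) \<in> E" using urc CE by blast
  have "Inv (es @ [u]) l (os @ [u])"
    unfolding Inv_def
  proof (intro conjI)
    show "l \<in> V" using ul FV by blast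
    show "set (es @ [u]) \<subseteq> V" using InvD(1,2)[OF I] by simp
    show "l \<notin> set (es @ [u])" using succ_notin[OF I lE] .
    show "\<forall>a. (a, l) \<in> E \<longrightarrow> a \<in> set (es @ [u])" using preds_l[OF ul] by auto
    show "\<forall>a b. (a, b) \<in> E \<longrightarrow> b \<in> set (es @ [u]) \<longrightarrow> a \<in> set (es @ [u])" using anc_snoc[OF I] .
    show "set (os @ [u]) \<subseteq> set (es @ [u])" using InvD(6)[OF I] by auto
    show "distinct (os @ [u])" using InvD(6,7)[OF I] uX by auto
    show "\<forall>w\<in>set (os @ [u]). (w, lcf w) \<in> F" using InvD(8)[OF I] ul lu by auto
    show "chain r (os @ [u])" using chain_snoc InvD(9,10)[OF I] by blast
    show "(topl r (os @ [u]), l) \<in> C\<^sup>*" by (simp add: topl_def lu)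
    show "\<forall>w\<in>set (es @ [u]). (\<exists>l. (w, l) \<in> F) \<longrightarrow> w \<notin> set (os @ [u]) \<longrightarrow> (\<forall>y. (lcf w, y) \<in> C\<^sup>* \<longrightarrow> y \<in> set (es @ [u]))"
      using InvD(11)[OF I] by auto
    show "\<forall>w\<in>set (os @ [u]). \<forall>a b. (a, b) \<in> E \<longrightarrow> a \<notin> set (es @ [u]) \<longrightarrow> b \<notin> set (es @ [u]) \<longrightarrow> (lcf w, b) \<in> R\<^sup>* \<longrightarrow> (lcf w, a) \<in> R\<^sup>*"
    proof
      fix w assume "w \<in> set (os @ [u])"
      then consider "w \<in> set os" | "w = u" by auto
      then show "\<forall>a b. (a, b) \<in> E \<longrightarrow> a \<notin> set (es @ [u]) \<longrightarrow> b \<notin> set (es @ [u]) \<longrightarrow> (lcf w, b) \<in> R\<^sup>* \<longrightarrow> (lcf w, a) \<in> R\<^sup>*"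
      proof cases
        case 1
        then show ?thesis using InvD(12)[OF I] by simp
      next
        case 2
        then show ?thesis using fork_closure[OF I ul] lu by simp
      qed
    qed
    show "\<forall>w\<in>set (os @ [u]). rcf w \<notin> set (es @ [u]) \<and> rcf w \<noteq> l"
    proof
      fix w assume "w \<in> set (os @ [u])"
      then consider "w \<in> set os" | "w = u" by auto
      then show "rcf w \<notin> set (es @ [u]) \<and> rcf w \<noteq> l"
      proof cases
        case 1
        have "rcf w \<noteq> l"
        proof
          assume "rcf w = l"
          moreover have "(w, rcf w) \<in> C" using rcfC InvD(8)[OF I 1] .
          ultimately have "w = u" using preds_l[OF ul] CE by blast
          thus False using 1 InvD(6)[OF I] uX by blast
        qed
        thus ?thesis using InvD(13,14)[OF I 1] by simp
      next
        case 2
        have "rcf u \<noteq> l" using urc ul CF by blast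
        thus ?thesis using succ_notin[OF I rE] 2 by simp
      qed
    qed
    show "\<forall>y\<in>V. y \<notin> set (es @ [u]) \<longrightarrow> y \<noteq> l \<longrightarrow> (\<forall>a. (a, y) \<in> E \<longrightarrow> a \<in> set (es @ [u])) \<longrightarrow> y \<in> rcf ` set (os @ [u])"
    proof (intro ballI impI)
      fix y assume y: "y \<in> V" "y \<notin> set (es @ [u])" "y \<noteq> l" "\<forall>a. (a, y) \<in> E \<longrightarrow> a \<in> set (es @ [u])"
      show "y \<in> rcf ` set (os @ [u])"
      proof (cases "(u, y) \<in> E")
        case True
        have "(u, y) \<in> C \<or> (u, y) \<in> F \<or> (u, y) \<in> T" using True unfolding edges_def by blast
        moreover have "(u, y) \<notin> T" using Tsrc urc by blast
        moreover have "(u, y) \<notin> F" using F_fun ul y(3) by blast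
        ultimately have "y = rcf u" using urc C_fun by blast
        then show ?thesis by simp
      next
        case False
        hence "\<forall>a. (a, y) \<in> E \<longrightarrow> a \<in> set es" using y(4) by auto
        hence "y \<in> rcf ` set os" using InvD(15)[OF I y(1)] y(2) by simp
        then show ?thesis by auto
      qed
    qed
    show "H1 (es @ [u])" using H1_snoc InvD(16,17)[OF I] by blast
    show "H1r (es @ [u]) l" using H1r_noT Tsrc urc by blast
    show "H2 (es @ [u])"
      using H2_snoc[OF InvD(18)[OF I]] C_fun urc noT_rc[OF ul] lu by metis
  qed
  thus ?thesis using step by blast
qed

end



context fdag
begin

lemma close_case:
  assumes I: "Inv es u os" and nc: "\<nexists>d. (u, d) \<in> C" and nm: "u \<notin> thread_of C r"
  shows "(seq_step C F T)\<^sup>+\<^sup>+ (es, Some u, map rcf os) (es @ [u], Some (rcf (last os)), map rcf (butlast os))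
         \<and> Inv (es @ [u]) (rcf (last os)) (butlast os)"
proof -
  have uV: "u \<in> V" using InvD(1)[OF I] .
  have uX: "u \<notin> set es" using InvD(3)[OF I] .
  obtain x where ux: "(u, x) \<in> T" "outdeg E u = 1" using D(19) uV nc nm by blast
  have out: "{c. (u, c) \<in> E} = {x}"
    using card1_eq[OF succs_fin] ux TE unfolding outdeg_def by blast
  have ne: "os \<noteq> []"
  proof
    assume "os = []"
    hence "(r, u) \<in> C\<^sup>*" using InvD(10)[OF I] by (simp add: topl_def)
    thus False using nm Cstar_thread thread_sym by metis
  qed
  define top where "top = last os"
  define L where "L = lcf top"
  define rc where "rc = rcf top"
  have topos: "top \<in> set os" using ne top_def by simp
  have tL: "(top, L) \<in> F" using InvD(8)[OF I topos] L_def by simp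
  have trc: "(top, rc) \<in> C" using rcfC[OF tL[unfolded L_def]] rc_def by simp
  have Lu: "(L, u) \<in> C\<^sup>*" using InvD(10)[OF I] topl_ne[OF ne] L_def top_def by simp
  have uL: "u \<in> thread_of C L" using Lu Cstar_thread thread_sym by metis
  obtain lp where lp: "(lp, x) \<in> C" using T_Cpred ux(1) by blast
  have rcx: "(rc, x) \<in> E\<^sup>*" using structured_lp(2)[OF tL trc uL ux(1) lp] .
  have rcX: "rc \<notin> set es" "rc \<noteq> u" using InvD(13,14)[OF I topos] rc_def by auto
  have lpu: "lp \<noteq> u" using lp nc by blast
  have lpX: "lp \<notin> set es"
  proof
    assume lpX: "lp \<in> set es"
    have "rc \<noteq> x" using noT_rc[OF tL trc] ux(1) by blast
    then obtain q where q: "(rc, q) \<in> E\<^sup>*" "(q, x) \<in> E" using rcx by (metis rtranclE)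
    have "q \<in> {u, lp}" using touch_preds[OF ux(1) lp] q(2) by blast
    moreover have "q \<noteq> u"
    proof
      assume "q = u"
      then obtain q' where "(rc, q') \<in> E\<^sup>*" "(q', u) \<in> E" using q(1) rcX(2) by (metis rtranclE)
      hence "rc \<in> set es" using InvD(4,5)[OF I] anc_closed_star by blast
      thus False using rcX by blast
    qed
    ultimately have "q = lp" by blast
    hence "rc \<in> set es" using q(1) lpX InvD(5)[OF I] anc_closed_star by blast
    thus False using rcX by blast
  qed
  have nf: "\<nexists>l. (u, l) \<in> F" using fork_C nc by blast
  have s1: "seq_step C F T (es, Some u, map rcf os) (es @ [u], None, map rcf os)"
  proof (rule seq_step.idle[OF nf])
    show "\<not> (\<exists>c. {c. (u, c) \<in> E} = {c} \<and> ready E (es @ [u]) c)"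
    proof
      assume "\<exists>c. {c. (u, c) \<in> E} = {c} \<and> ready E (es @ [u]) c"
      then obtain c where "{c. (u, c) \<in> E} = {c}" "ready E (es @ [u]) c" by blast
      hence "c = x" using out by blast
      hence "lp \<in> set (es @ [u])" using \<open>ready E (es @ [u]) c\<close> lp CE unfolding ready_def by blast
      thus False using lpX lpu by simp
    qed
  qed
  have osd: "os = butlast os @ [top]" using ne top_def by simp
  have s2: "seq_step C F T (es @ [u], None, map rcf os) (es @ [u], Some rc, map rcf (butlast os))"
  proof -
    have "map rcf os = map rcf (butlast os) @ [rc]" using osd rc_def by (metis list.simps(8,9) map_append)
    thus ?thesis using seq_step.pop by metis
  qed
  have steps: "(seq_step C F T)\<^sup>+\<^sup>+ (es, Some u, map rcf os) (es @ [u], Some rc, map rcf (butlast os))"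
    using s1 s2 by auto
  have dist: "distinct os" using InvD(7)[OF I] .
  have topb: "top \<notin> set (butlast os)" using dist osd by (metis distinct_append disjoint_iff list.set_intros(1))
  have setos: "set os = insert top (set (butlast os))" using osd by (metis Un_insert_right append_Nil2 list.simps(15) set_append)
  have topX: "top \<in> set es" using InvD(6)[OF I] topos by blast
  have "Inv (es @ [u]) rc (butlast os)"
    unfolding Inv_def
  proof (intro conjI)
    show "rc \<in> V" using trc CV by blast
    show "set (es @ [u]) \<subseteq> V" using InvD(1,2)[OF I] by simp
    show "rc \<notin> set (es @ [u])" using rcX by simp
    show "\<forall>a. (a, rc) \<in> E \<longrightarrow> a \<in> set (es @ [u])" using preds_rc[OF tL trc] topX by auto
    show "\<forall>a b. (a, b) \<in> E \<longrightarrow> b \<in> set (es @ [u]) \<longrightarrow> a \<in> set (es @ [u])" using anc_snoc[OF I] .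
    show "set (butlast os) \<subseteq> set (es @ [u])" using InvD(6)[OF I] setos by auto
    show "distinct (butlast os)" using dist by (simp add: distinct_butlast)
    show "\<forall>w\<in>set (butlast os). (w, lcf w) \<in> F" using InvD(8)[OF I] setos by auto
    show "chain r (butlast os)" using InvD(9)[OF I] osd chain_snoc by metis
    have "(topl r (butlast os), top) \<in> C\<^sup>*" using InvD(9)[OF I] osd chain_snoc by metis
    thus "(topl r (butlast os), rc) \<in> C\<^sup>*" using trc by (meson rtrancl.rtrancl_into_rtrancl)
    show "\<forall>w\<in>set (es @ [u]). (\<exists>l. (w, l) \<in> F) \<longrightarrow> w \<notin> set (butlast os) \<longrightarrow> (\<forall>y. (lcf w, y) \<in> C\<^sup>* \<longrightarrow> y \<in> set (es @ [u]))"
    proof (intro ballI impI allI)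
      fix w y assume w: "w \<in> set (es @ [u])" "\<exists>l. (w, l) \<in> F" "w \<notin> set (butlast os)" "(lcf w, y) \<in> C\<^sup>*"
      have wu: "w \<noteq> u" using w(2) nf by blast
      show "y \<in> set (es @ [u])"
      proof (cases "w = top")
        case True
        hence "(L, y) \<in> C\<^sup>*" using w(4) L_def by simp
        hence yu: "(y, u) \<in> C\<^sup>*" using last_fwd Lu nc by blast
        show ?thesis
        proof (cases "y = u")
          case True then show ?thesis by simp
        next
          case False
          then obtain q where "(y, q) \<in> C\<^sup>*" "(q, u) \<in> C" using yu by (metis rtranclE)
          moreover have "(y, q) \<in> E\<^sup>*" using \<open>(y, q) \<in> C\<^sup>*\<close> by (rule rtrancl_mono[THEN subsetD, rotated]) (rule CE)
          ultimately have "y \<in> set es" using InvD(4,5)[OF I] anc_closed_star CE by blast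
          then show ?thesis by simp
        qed
      next
        case False
        hence "w \<notin> set os" using w(3) setos by blast
        moreover have "w \<in> set es" using w(1) wu by simp
        ultimately show ?thesis using InvD(11)[OF I _ w(2) _ w(4)] by simp
      qed
    qed
    show "\<forall>w\<in>set (butlast os). \<forall>a b. (a, b) \<in> E \<longrightarrow> a \<notin> set (es @ [u]) \<longrightarrow> b \<notin> set (es @ [u]) \<longrightarrow> (lcf w, b) \<in> R\<^sup>* \<longrightarrow> (lcf w, a) \<in> R\<^sup>*"
      using InvD(12)[OF I] setos by simp
    show "\<forall>w\<in>set (butlast os). rcf w \<notin> set (es @ [u]) \<and> rcf w \<noteq> rc"
    proof
      fix w assume w: "w \<in> set (butlast os)"
      hence wos: "w \<in> set os" using setos by blast
      have "rcf w \<noteq> rc"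
      proof
        assume "rcf w = rc"
        moreover have "(w, rcf w) \<in> C" using rcfC InvD(8)[OF I wos] .
        ultimately have "w = top" using trc C_inj by blast
        thus False using w topb by blast
      qed
      thus "rcf w \<notin> set (es @ [u]) \<and> rcf w \<noteq> rc" using InvD(13,14)[OF I wos] by simp
    qed
    show "\<forall>y\<in>V. y \<notin> set (es @ [u]) \<longrightarrow> y \<noteq> rc \<longrightarrow> (\<forall>a. (a, y) \<in> E \<longrightarrow> a \<in> set (es @ [u])) \<longrightarrow> y \<in> rcf ` set (butlast os)"
    proof (intro ballI impI)
      fix y assume y: "y \<in> V" "y \<notin> set (es @ [u])" "y \<noteq> rc" "\<forall>a. (a, y) \<in> E \<longrightarrow> a \<in> set (es @ [u])"
      have "(u, y) \<notin> E"
      proof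
        assume "(u, y) \<in> E"
        hence "y = x" using out by blast
        hence "lp \<in> set (es @ [u])" using y(4) lp CE by blast
        thus False using lpX lpu by simp
      qed
      hence "\<forall>a. (a, y) \<in> E \<longrightarrow> a \<in> set es" using y(4) by auto
      hence "y \<in> rcf ` set os" using InvD(15)[OF I y(1)] y(2) by simp
      then obtain w where "w \<in> set os" "y = rcf w" by blast
      moreover have "w \<noteq> top" using calculation y(3) rc_def by blast
      ultimately show "y \<in> rcf ` set (butlast os)" using setos by blast
    qed
    show "H1 (es @ [u])" using H1_snoc InvD(16,17)[OF I] by blast
    show "H1r (es @ [u]) rc"
      unfolding H1r_def
    proof (intro allI impI)
      fix v' l' rc' fp x'
      assume a: "(v', l') \<in> F" "(v', rc') \<in> C" "fp \<in> thread_of C l'" "(fp, x') \<in> T"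
        "es @ [u] \<noteq> []" "last (es @ [u]) = fp"
      have fpu: "fp = u" using a(6) by simp
      have "l' \<in> thread_of C L" using a(3) fpu uL thread_sym thread_trans by metis
      hence "l' = L" using first_unique noC_l a(1) tL by metis
      hence "top \<in> {a. (a, l') \<in> E}" using tL FE by auto
      hence "v' = top" using preds_l[OF a(1)] by auto
      thus "rc = rc'" using a(2) trc C_fun by blast
    qed
    show "H2 (es @ [u])" using H2_snoc[OF InvD(18)[OF I]] nc by blast
  qed
  thus ?thesis using steps top_def rc_def by simp
qed

definition Final where "Final es \<longleftrightarrow> V \<subseteq> set es \<and> H1 es \<and> H2 es \<and> es \<noteq> [] \<and> (\<forall>x. (last es, x) \<notin> T)"

lemma end_case:
  assumes I: "Inv es u os" and nc: "\<nexists>d. (u, d) \<in> C" and m: "u \<in> thread_of C r"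
  shows "seq_step C F T (es, Some u, map rcf os) (es @ [u], None, []) \<and> Final (es @ [u])"
proof -
  have os: "os = []"
  proof (rule ccontr)
    assume ne: "os \<noteq> []"
    let ?L = "lcf (last os)"
    have tL: "(last os, ?L) \<in> F" using InvD(8)[OF I] ne by simp
    have "(?L, u) \<in> C\<^sup>*" using InvD(10)[OF I] topl_ne[OF ne] by simp
    hence "?L \<in> thread_of C r" using m Cstar_thread thread_trans by metis
    moreover have "\<nexists>d. (d, r) \<in> C" using r_nopred CE by blast
    ultimately have "?L = r" using first_unique noC_l[OF tL] by metis
    thus False using tL r_nopred FE by blast
  qed
  have nf: "\<nexists>l. (u, l) \<in> F" using fork_C nc by blast
  have nT: "\<forall>x. (u, x) \<notin> T" using Tsrc m by blast
  have out: "{c. (u, c) \<in> E} = {}" using nc nf nT unfolding edges_def by blast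
  have step: "seq_step C F T (es, Some u, map rcf os) (es @ [u], None, [])"
  proof -
    have "seq_step C F T (es, Some u, []) (es @ [u], None, [])"
      by (rule seq_step.idle[OF nf]) (use out in simp)
    thus ?thesis using os by simp
  qed
  have all: "\<forall>y. y \<in> V \<longrightarrow> y \<in> set (es @ [u])"
  proof (intro allI)
    fix y show "y \<in> V \<longrightarrow> y \<in> set (es @ [u])"
    proof (induction y rule: wf_induct[OF wfE])
      case (1 y)
      show ?case
      proof (rule impI, rule ccontr)
        assume y: "y \<in> V" "y \<notin> set (es @ [u])"
        have "\<forall>a. (a, y) \<in> E \<longrightarrow> a \<in> set es"
        proof (intro allI impI)
          fix a assume ay: "(a, y) \<in> E"
          hence "a \<in> V" using EV by blast
          hence "a \<in> set (es @ [u])" using 1 ay by blast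
          moreover have "a \<noteq> u" using ay out by blast
          ultimately show "a \<in> set es" by simp
        qed
        hence "y \<in> rcf ` set os" using InvD(15)[OF I y(1)] y(2) by simp
        thus False using os by simp
      qed
    qed
  qed
  have "Final (es @ [u])"
    unfolding Final_def
  proof (intro conjI)
    show "V \<subseteq> set (es @ [u])" using all by blast
    show "H1 (es @ [u])" using H1_snoc InvD(16,17)[OF I] by blast
    show "H2 (es @ [u])" using H2_snoc[OF InvD(18)[OF I]] nc by blast
    show "es @ [u] \<noteq> []" by simp
    show "\<forall>x. (last (es @ [u]), x) \<notin> T" using nT by simp
  qed
  thus ?thesis using step by blast
qed

end



context fdag
begin

lemma macro:
  assumes I: "Inv es u os"
  shows "(\<exists>os' u'. (seq_step C F T)\<^sup>+\<^sup>+ (es, Some u, map rcf os) (es @ [u], Some u', map rcf os') \<and> Inv (es @ [u]) u' os')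
         \<or> (seq_step C F T (es, Some u, map rcf os) (es @ [u], None, []) \<and> Final (es @ [u]))"
proof (cases "\<exists>l. (u, l) \<in> F")
  case True
  then obtain l where "(u, l) \<in> F" by blast
  from fork_case[OF I this] show ?thesis by blast
next
  case nf: False
  show ?thesis
  proof (cases "\<exists>c. (u, c) \<in> C")
    case True
    then obtain c where "(u, c) \<in> C" by blast
    from cont_case[OF I this] nf show ?thesis by blast
  next
    case nc: False
    show ?thesis
    proof (cases "u \<in> thread_of C r")
      case True
      from end_case[OF I _ True] nc show ?thesis by blast
    next
      case False
      from close_case[OF I _ False] nc show ?thesis by blast
    qed
  qed
qed

lemma det: "seq_step C F T s s1 \<Longrightarrow> seq_step C F T s s2 \<Longrightarrow> s1 = s2"
proof (induction rule: seq_step.induct)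
  case (fork u l rc es dq)
  from fork.prems show ?case
  proof (cases rule: seq_step.cases)
    case (fork l' rc')
    then show ?thesis using fork.hyps F_fun C_fun by blast
  qed (use fork.hyps in blast)+
next
  case (cont u c es dq)
  from cont.prems show ?case
  proof (cases rule: seq_step.cases)
    case (cont c')
    then show ?thesis using cont.hyps by auto
  qed (use cont.hyps in blast)+
next
  case (idle u es dq)
  from idle.prems show ?case
  proof (cases rule: seq_step.cases)
    case (idle)
    then show ?thesis by simp
  qed (use idle.hyps in blast)+
next
  case (pop es dq w)
  from pop.prems show ?case
  proof (cases rule: seq_step.cases)
    case (pop dq' w')
    then show ?thesis by simp
  qed
qed

lemma det_reach:
  assumes "(seq_step C F T)\<^sup>*\<^sup>* a b" "(seq_step C F T)\<^sup>*\<^sup>* a c"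
  shows "(seq_step C F T)\<^sup>*\<^sup>* b c \<or> (seq_step C F T)\<^sup>*\<^sup>* c b"
  using assms(1)
proof (induction rule: rtranclp_induct)
  case base
  then show ?case using assms(2) by blast
next
  case (step y z)
  show ?case
  proof (cases "(seq_step C F T)\<^sup>*\<^sup>* c y")
    case True
    then show ?thesis using step.hyps(2) by (meson rtranclp.rtrancl_into_rtrancl)
  next
    case False
    hence yc: "(seq_step C F T)\<^sup>*\<^sup>* y c" using step.IH by blast
    show ?thesis
    proof (cases "y = c")
      case True
      then show ?thesis using step.hyps(2) by blast
    next
      case False
      then obtain z' where "seq_step C F T y z'" "(seq_step C F T)\<^sup>*\<^sup>* z' c"
        using yc by (metis converse_rtranclpE)
      moreover have "z' = z" using det calculation(1) step.hyps(2) by blast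
      ultimately show ?thesis by blast
    qed
  qed
qed

lemma terminal: "\<not> seq_step C F T (es, None, []) s"
  by (auto elim: seq_step.cases)

lemma terminal_reach: "(seq_step C F T)\<^sup>*\<^sup>* (es, None, []) s \<Longrightarrow> s = (es, None, [])"
  using terminal by (metis converse_rtranclpE)

lemma card_dec:
  assumes I: "Inv es u os" shows "card (V - set (es @ [u])) < card (V - set es)"
proof -
  have "u \<in> V - set es" using InvD(1,3)[OF I] by blast
  hence "card ((V - set es) - {u}) < card (V - set es)"
    by (intro card_Diff1_less) (use finV in auto)
  moreover have "V - set (es @ [u]) = (V - set es) - {u}" by auto
  ultimately show ?thesis by simp
qed

lemma run_final:
  "Inv es u os \<Longrightarrow> (seq_step C F T)\<^sup>*\<^sup>* (es, Some u, map rcf os) (esB, None, []) \<Longrightarrow> Final esB"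
proof (induction "card (V - set es)" arbitrary: es u os rule: less_induct)
  case less
  show ?case
  using macro[OF less.prems(1)]
  proof (elim disjE exE conjE)
    fix os' u'
    assume s: "(seq_step C F T)\<^sup>+\<^sup>+ (es, Some u, map rcf os) (es @ [u], Some u', map rcf os')"
      and I': "Inv (es @ [u]) u' os'"
    have "(seq_step C F T)\<^sup>*\<^sup>* (esB, None, []) (es @ [u], Some u', map rcf os') \<or>
          (seq_step C F T)\<^sup>*\<^sup>* (es @ [u], Some u', map rcf os') (esB, None, [])"
      using det_reach[OF less.prems(2) tranclp_into_rtranclp[OF s]] .
    hence r: "(seq_step C F T)\<^sup>*\<^sup>* (es @ [u], Some u', map rcf os') (esB, None, [])"
      using terminal_reach by blast
    show "Final esB" using less.hyps[OF card_dec[OF less.prems(1)] I' r] .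
  next
    assume s: "seq_step C F T (es, Some u, map rcf os) (es @ [u], None, [])" and fin: "Final (es @ [u])"
    have "(seq_step C F T)\<^sup>*\<^sup>* (esB, None, []) (es @ [u], None, []) \<or>
          (seq_step C F T)\<^sup>*\<^sup>* (es @ [u], None, []) (esB, None, [])"
      using det_reach[OF less.prems(2)] s by blast
    hence "esB = es @ [u]" using terminal_reach by blast
    thus "Final esB" using fin by simp
  qed
qed

lemma run_exists:
  "Inv es u os \<Longrightarrow> \<exists>esB. (seq_step C F T)\<^sup>*\<^sup>* (es, Some u, map rcf os) (esB, None, [])"
proof (induction "card (V - set es)" arbitrary: es u os rule: less_induct)
  case less
  show ?case
  using macro[OF less.prems(1)]
  proof (elim disjE exE conjE)
    fix os' u'
    assume s: "(seq_step C F T)\<^sup>+\<^sup>+ (es, Some u, map rcf os) (es @ [u], Some u', map rcf os')"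
      and I': "Inv (es @ [u]) u' os'"
    obtain esB where "(seq_step C F T)\<^sup>*\<^sup>* (es @ [u], Some u', map rcf os') (esB, None, [])"
      using less.hyps[OF card_dec[OF less.prems(1)] I'] by blast
    thus ?thesis using s by (meson rtranclp_trans tranclp_into_rtranclp)
  next
    assume s: "seq_step C F T (es, Some u, map rcf os) (es @ [u], None, [])"
    thus ?thesis by blast
  qed
qed

lemma init_inv: "Inv [] r []"
  unfolding Inv_def
proof (intro conjI)
  show "\<forall>y\<in>V. y \<notin> set [] \<longrightarrow> y \<noteq> r \<longrightarrow> (\<forall>a. (a, y) \<in> E \<longrightarrow> a \<in> set []) \<longrightarrow> y \<in> rcf ` set []"
  proof (intro ballI impI)
    fix y assume y: "y \<in> V" "y \<notin> set []" "y \<noteq> r" "\<forall>a. (a, y) \<in> E \<longrightarrow> a \<in> set []"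
    have "indeg E y \<in> {1, 2}" using D(12) y by blast
    hence "card {a. (a, y) \<in> E} \<noteq> 0" unfolding indeg_def by auto
    hence "{a. (a, y) \<in> E} \<noteq> {}" by (metis card.empty)
    thus "y \<in> rcf ` set []" using y(4) by auto
  qed
qed (auto simp: rV r_nopred topl_def H1_def H1r_def H2_def)

lemma main_loc:
  "(\<exists>es. seq_exec C F T r es) \<and>
         (\<forall>es. seq_exec C F T r es \<longrightarrow>
            (\<forall>x v l rc fp lp.
               (v, l) \<in> F \<longrightarrow> (v, rc) \<in> C \<longrightarrow> fp \<in> thread_of C l \<longrightarrow>
               (fp, x) \<in> T \<longrightarrow> (lp, x) \<in> C \<longrightarrow>
               (\<exists>i j. i < j \<and> j < length es \<and> es ! i = fp \<and> es ! j = lp) \<and>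
               (\<exists>i. Suc i < length es \<and> es ! i = fp \<and> es ! Suc i = rc)))"
proof (intro conjI allI impI)
  show "\<exists>es. seq_exec C F T r es"
    using run_exists[OF init_inv] unfolding seq_exec_def by simp
next
  fix es x v l rc fp lp
  assume ex: "seq_exec C F T r es" and a: "(v, l) \<in> F" "(v, rc) \<in> C" "fp \<in> thread_of C l"
    "(fp, x) \<in> T" "(lp, x) \<in> C"
  have fin: "Final es" using run_final[OF init_inv] ex unfolding seq_exec_def by simp
  hence fe: "V \<subseteq> set es" "H1 es" "H2 es" "es \<noteq> []" "\<forall>x. (last es, x) \<notin> T"
    unfolding Final_def by blast+
  have "lp \<in> set es" using a(5) CV fe(1) by blast
  then obtain j where j: "j < length es" "es ! j = lp" by (metis in_set_conv_nth)
  have "fp \<in> set (take j es)" using fe(3) j a(4,5) unfolding H2_def by blast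
  then obtain i where i: "i < length (take j es)" "take j es ! i = fp" by (metis in_set_conv_nth)
  have "i < j" "es ! i = fp" using i by auto
  hence part1: "\<exists>i j. i < j \<and> j < length es \<and> es ! i = fp \<and> es ! j = lp" using j by blast
  have "fp \<in> set es" using a(4) TV fe(1) by blast
  then obtain k where k: "k < length es" "es ! k = fp" by (metis in_set_conv_nth)
  have sk: "Suc k < length es"
  proof (rule ccontr)
    assume "\<not> Suc k < length es"
    hence "k = length es - 1" using k(1) by simp
    hence "last es = fp" using k(2) fe(4) by (simp add: last_conv_nth)
    thus False using fe(5) a(4) by blast
  qed
  have "es ! Suc k = rc" using fe(2) a(1-4) sk k(2) unfolding H1_def by blast
  show "\<exists>i j. i < j \<and> j < length es \<and> es ! i = fp \<and> es ! j = lp" using part1 .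
  show "\<exists>i. Suc i < length es \<and> es ! i = fp \<and> es ! Suc i = rc" using \<open>es ! Suc k = rc\<close> sk k(2) by blast
qed

end

theorem mainTheorem1:
  fixes V :: "'v set" and C F T :: "('v \<times> 'v) set" and r f :: 'v
  assumes "future_dag V C F T r f"
    and "structured_single_touch C F T"
  shows "(\<exists>es. seq_exec C F T r es) \<and>
         (\<forall>es. seq_exec C F T r es \<longrightarrow>
            (\<forall>x v l rc fp lp.
               (v, l) \<in> F \<longrightarrow> (v, rc) \<in> C \<longrightarrow> fp \<in> thread_of C l \<longrightarrow>
               (fp, x) \<in> T \<longrightarrow> (lp, x) \<in> C \<longrightarrow>
               (\<exists>i j. i < j \<and> j < length es \<and> es ! i = fp \<and> es ! j = lp) \<and>
               (\<exists>i. Suc i < length es \<and> es ! i = fp \<and> es ! Suc i = rc)))"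
  using fdag.main_loc[OF fdag.intro[OF assms]] .



end
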